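(* Let $n\ge2$, $r$ be an integer and $Q$ a real number with $0<Q\le2$. Consider nontrivial solutions $P\in\mathrm{Mat}(n^2,\mathbb{C})$ of rank $r$ to $$P^*=P,\quad P^2=P,\quad Q^2(P_1P_2P_1-P_2P_1P_2)=P_1-P_2,$$ where $P_1=P\otimes I_n$, $P_2=I_n\otimes P$. If $n\ge 2r$, no such solution exists, except in the case $Q=2$, $n=2$, $r=1$. If $2r\ge 2n^2-n$, no such solution exists, except in the case $Q=2$, $n=2$, $r=3$.
   Context: $I_n$ is the $n\times n$ identity matrix and $\otimes$ is the Kronecker product. A solution is trivial if $P=0$ or $P=I_n\otimes I_n$, nontrivial otherwise. *)

theory Defs
  imports "Jordan_Normal_Form.Schur_Decomposition" "Jordan_Normal_Form.DL_Rank"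
begin

definition kron :: "'a :: times mat \<Rightarrow> 'a mat \<Rightarrow> 'a mat" where
  "kron A B = mat (dim_row A * dim_row B) (dim_col A * dim_col B)
     (\<lambda>(i, j). A $$ (i div dim_row B, j div dim_col B) * B $$ (i mod dim_row B, j mod dim_col B))"

end

theory Submission
  imports Defs
begin

lemma rank_idem_trace:
  fixes P :: "'a::field mat"
  assumes P: "P \<in> carrier_mat N N" and idem: "P * P = P"
  shows "of_nat (vec_space.rank N P) = (\<Sum>i<N. P $$ (i,i))"
proof -
  interpret vec_space "TYPE('a)" N .
  obtain S where max: "maximal S (\<lambda>T. T \<subseteq> set (cols P) \<and> lin_indpt T)"
    using maximal_exists[of "(\<lambda>T. T \<subseteq> set (cols P) \<and> lin_indpt T)" "card (set (cols P))" "{}"]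
    by (meson List.finite_set card_mono empty_iff empty_subsetI finite_lin_indpt2 rev_finite_subset)
  have rk: "rank P = card S" by (rule rank_card_indpt[OF P max])
  have SP: "S \<subseteq> set (cols P)" and li: "lin_indpt S" using max unfolding maximal_def by auto
  have colsP: "set (cols P) \<subseteq> carrier_vec N" using P by (auto simp: cols_def)
  have Sc: "S \<subseteq> carrier_vec N" using SP colsP by auto
  have finS: "finite S" using SP finite_subset by blast
  obtain bs where bs: "set bs = S" "distinct bs" using finite_distinct_list[OF finS] by blast
  define r where "r = length bs"
  have r: "card S = r" unfolding r_def using bs distinct_card by metis
  define B where "B = mat_of_cols N bs"
  have B: "B \<in> carrier_mat N r" unfolding B_def r_def by simp
  have colsB: "cols B = bs" unfolding B_def using bs Sc by simp
  have distB: "distinct (cols B)" using colsB bs by simp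
  have inspan: "col P j \<in> span S" if j: "j < N" for j
  proof (cases "col P j \<in> S")
    case True then show ?thesis using in_own_span[OF Sc] by blast
  next
    case False
    have v: "col P j \<in> carrier_vec N" using P j by simp
    have "\<not> lin_indpt (S \<union> {col P j})"
    proof
      assume "lin_indpt (S \<union> {col P j})"
      moreover have "S \<union> {col P j} \<subseteq> set (cols P)" using SP j P by (auto simp: cols_def)
      ultimately have "S \<union> {col P j} = S" using max unfolding maximal_def by blast
      then show False using False by blast
    qed
    then show ?thesis using lin_dep_iff_in_span[OF Sc li v False] by simp
  qed
  have ex: "\<exists>c. c \<in> carrier_vec r \<and> col P j = B *\<^sub>v c" if j: "j < N" for j
  proof -
    obtain a where "lincomb a S = col P j" using finite_in_span[OF finS Sc inspan[OF j]] by blast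
    moreover have "B *\<^sub>v vec r (\<lambda>i. a (col B i)) = lincomb a (set (cols B))"
      by (rule mat_mult_eq_lincomb[OF B distB])
    ultimately show ?thesis using colsB bs by (intro exI[of _ "vec r (\<lambda>i. a (col B i))"]) auto
  qed
  define cf where "cf j = (SOME c. c \<in> carrier_vec r \<and> col P j = B *\<^sub>v c)" for j
  have cf: "cf j \<in> carrier_vec r" "col P j = B *\<^sub>v cf j" if "j < N" for j
    using someI_ex[OF ex[OF that]] unfolding cf_def by auto
  define C where "C = mat r N (\<lambda>(i,j). cf j $ i)"
  have C: "C \<in> carrier_mat r N" unfolding C_def by simp
  have colC: "col C j = cf j" if "j < N" for j
    using cf(1)[OF that] that unfolding C_def by (auto simp: col_def)
  have PBC: "P = B * C"
  proof (rule mat_col_eqI)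
    fix j assume "j < dim_col (B * C)"
    then have j: "j < N" using C by simp
    have "col (B * C) j = B *\<^sub>v col C j" using B C j by (rule col_mult2)
    then show "col P j = col (B * C) j" using cf(2)[OF j] colC[OF j] by simp
  qed (use P B C in auto)
  have PB: "P * B = B"
  proof (rule mat_col_eqI)
    fix i assume "i < dim_col B"
    then have i: "i < r" using B by simp
    have "col B i \<in> set (cols P)" using i B SP bs colsB by (metis cols_length cols_nth nth_mem subsetD carrier_matD(2))
    then obtain j where j: "j < N" "col B i = col P j" using P by (auto simp: in_set_conv_nth cols_def)
    have "col (P * B) i = P *\<^sub>v col B i" using P B i by (rule col_mult2)
    also have "\<dots> = col (P * P) j" using col_mult2[OF P P j(1)] j(2) by simp
    also have "\<dots> = col B i" using idem j by simp
    finally show "col (P * B) i = col B i" .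
  qed (use P B in auto)
  have CB: "C * B = 1\<^sub>m r"
  proof (rule mat_col_eqI)
    fix i assume "i < dim_col (1\<^sub>m r)"
    then have i: "i < r" by simp
    define w where "w = col (C * B) i - unit_vec r i"
    have w: "w \<in> carrier_vec r" unfolding w_def using C B i by simp
    have BCB: "B * (C * B) = B" using PBC PB B C by (metis assoc_mult_mat)
    have "B *\<^sub>v col (C * B) i = col B i" using BCB B C i by (metis col_mult2 mult_carrier_mat)
    moreover have "B *\<^sub>v unit_vec r i = col B i"
      using B i by (metis col_mult2 col_one one_carrier_mat right_mult_one_mat)
    ultimately have "B *\<^sub>v w = 0\<^sub>v N" unfolding w_def using B C i
      by (subst mult_minus_distrib_mat_vec[of B N r]) auto
    moreover have "lin_indpt (set (cols B))" using li colsB bs by simp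
    ultimately have "w = 0\<^sub>v r" using lin_depI[OF B w _ _ distB] by blast
    then have w0: "w = 0\<^sub>v r" .
    have "col (C * B) i = unit_vec r i"
    proof (rule eq_vecI)
      fix k assume "k < dim_vec (unit_vec r i)"
      then have k: "k < r" by simp
      have "w $ k = 0" using w0 k by simp
      then show "col (C * B) i $ k = unit_vec r i $ k" unfolding w_def using C B i k by simp
    qed (use C B in simp)
    then show "col (C * B) i = col (1\<^sub>m r) i" using i by simp
  qed (use C B in auto)
  have "(\<Sum>i<N. P $$ (i,i)) = (\<Sum>i<N. \<Sum>k<r. B $$ (i,k) * C $$ (k,i))"
    unfolding PBC using B C by (intro sum.cong refl) (auto simp: scalar_prod_def row_def col_def lessThan_atLeast0)
  also have "\<dots> = (\<Sum>k<r. \<Sum>i<N. C $$ (k,i) * B $$ (i,k))"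
    by (subst sum.swap) (simp add: mult.commute)
  also have "\<dots> = (\<Sum>k<r. (C * B) $$ (k,k))"
    using B C by (intro sum.cong refl) (auto simp: scalar_prod_def row_def col_def lessThan_atLeast0)
  also have "\<dots> = of_nat r" unfolding CB by simp
  finally show ?thesis unfolding rk r by simp
qed

lemma sum_lessThan_add_split:
  fixes f :: "nat \<Rightarrow> 'a::comm_monoid_add"
  shows "(\<Sum>c<a+b. f c) = (\<Sum>c<a. f c) + (\<Sum>j<b. f (a+j))"
  by (induction b) (simp_all add: add.assoc)

lemma sum_split_mult:
  fixes f :: "nat \<Rightarrow> 'a::comm_monoid_add"
  shows "(\<Sum>c<m*n. f c) = (\<Sum>i<m. \<Sum>j<n. f (i*n+j))"
proof (induction m)
  case 0 then show ?case by simp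
next
  case (Suc m)
  have "(\<Sum>c<Suc m*n. f c) = (\<Sum>c<m*n. f c) + (\<Sum>j<n. f (m*n+j))"
    using sum_lessThan_add_split[of f "m*n" n] by (simp add: add.commute)
  then show ?case using Suc by simp
qed

definition ip :: "nat \<Rightarrow> (nat \<Rightarrow> complex) \<Rightarrow> (nat \<Rightarrow> complex) \<Rightarrow> complex" where
  "ip n a b = (\<Sum>i<n. cnj (a i) * b i)"

definition form :: "nat \<Rightarrow> (nat \<Rightarrow> nat \<Rightarrow> complex) \<Rightarrow> (nat \<Rightarrow> complex) \<Rightarrow> (nat \<Rightarrow> complex) \<Rightarrow> complex" where
  "form n B a b = (\<Sum>i<n. \<Sum>j<n. cnj (a i) * B i j * b j)"

definition hermf :: "nat \<Rightarrow> (nat \<Rightarrow> nat \<Rightarrow> complex) \<Rightarrow> bool" where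
  "hermf n B \<longleftrightarrow> (\<forall>i<n. \<forall>j<n. B j i = cnj (B i j))"

lemma form_expand:
  "form n B (\<lambda>i. a i - l * b i) (\<lambda>i. a i - l * b i) =
   form n B a a - l * form n B a b - cnj l * form n B b a + cnj l * l * form n B b b"
proof -
  have "\<And>i j. cnj (a i - l * b i) * B i j * (a j - l * b j) =
     cnj (a i) * B i j * a j - l * (cnj (a i) * B i j * b j) - cnj l * (cnj (b i) * B i j * a j)
     + cnj l * l * (cnj (b i) * B i j * b j)"
    by (simp add: algebra_simps)
  then show ?thesis unfolding form_def
    by (simp only: sum.distrib sum_subtractf sum_distrib_left)
qed

lemma form_swap:
  assumes "hermf n B"
  shows "form n B b a = cnj (form n B a b)"
proof -
  have "cnj (form n B a b) = (\<Sum>i<n. \<Sum>j<n. a i * cnj (B i j) * cnj (b j))"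
    by (simp add: form_def)
  also have "\<dots> = (\<Sum>i<n. \<Sum>j<n. a i * B j i * cnj (b j))"
  proof (intro sum.cong refl)
    fix i j assume "i \<in> {..<n}" "j \<in> {..<n}"
    then have "B j i = cnj (B i j)" using assms unfolding hermf_def by blast
    then show "a i * cnj (B i j) * cnj (b j) = a i * B j i * cnj (b j)" by simp
  qed
  also have "\<dots> = (\<Sum>j<n. \<Sum>i<n. a i * B j i * cnj (b j))"
    by (rule sum.swap)
  also have "\<dots> = form n B b a"
    unfolding form_def by (intro sum.cong refl) (simp add: mult_ac)
  finally show ?thesis by simp
qed

lemma form_real:
  assumes "hermf n B"
  shows "form n B a a = complex_of_real (Re (form n B a a))"
proof -
  have e: "Im (form n B a a) = Im (cnj (form n B a a))" using form_swap[OF assms, of a a] by simp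
  then have "Im (form n B a a) = 0" by simp
  then show ?thesis by (simp add: complex_eq_iff)
qed

lemma form_cs:
  assumes h: "hermf n B" and psd: "\<And>y. 0 \<le> Re (form n B y y)"
  shows "(cmod (form n B a b))^2 \<le> Re (form n B a a) * Re (form n B b b)"
proof -
  define F where "F = Re (form n B a a)"
  define G where "G = Re (form n B b b)"
  define S where "S = form n B a b"
  have Fr: "form n B a a = of_real F" unfolding F_def using form_real[OF h] .
  have Gr: "form n B b b = of_real G" unfolding G_def using form_real[OF h] .
  have Sba: "form n B b a = cnj S" unfolding S_def using form_swap[OF h] .
  have SS: "S * cnj S = of_real ((cmod S)^2)" by (rule complex_norm_square[symmetric])
  have ex: "Re (form n B (\<lambda>i. a i - l * b i) (\<lambda>i. a i - l * b i)) =
            F - Re (l * S) - Re (cnj l * cnj S) + (cmod l)^2 * G" for l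
    unfolding form_expand Fr Gr Sba S_def[symmetric]
    by (simp add: complex_norm_square[symmetric] mult.commute)
  have G0: "0 \<le> G" unfolding G_def using psd .
  show ?thesis
  proof (cases "G = 0")
    case False
    then have Gp: "G > 0" using G0 by simp
    define l where "l = cnj S / of_real G"
    have "0 \<le> F - Re (l * S) - Re (cnj l * cnj S) + (cmod l)^2 * G"
      using psd[of "\<lambda>i. a i - l * b i"] ex[of l] by simp
    moreover have "Re (l * S) = (cmod S)^2 / G"
      unfolding l_def using SS by (simp add: mult.commute)
    moreover have "Re (cnj l * cnj S) = (cmod S)^2 / G"
      unfolding l_def using SS by (simp add: mult.commute)
    moreover have "(cmod l)^2 * G = (cmod S)^2 / G"
      unfolding l_def using Gp by (simp add: norm_divide power_divide power2_eq_square)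
    ultimately have "0 \<le> F - (cmod S)^2 / G" by linarith
    then have "(cmod S)^2 \<le> F * G" using Gp by (simp add: field_simps)
    then show ?thesis unfolding S_def F_def G_def .
  next
    case True
    have "cmod S = 0"
    proof (rule ccontr)
      assume ne: "cmod S \<noteq> 0"
      then have pos: "(cmod S)^2 > 0" by simp
      define t where "t = (F + 1) / (2 * (cmod S)^2)"
      define l where "l = of_real t * cnj S"
      have "0 \<le> F - Re (l * S) - Re (cnj l * cnj S) + (cmod l)^2 * G"
        using psd[of "\<lambda>i. a i - l * b i"] ex[of l] by simp
      moreover have "Re (l * S) = t * (cmod S)^2"
        unfolding l_def cmod_power2 by (simp add: power2_eq_square algebra_simps)
      moreover have "Re (cnj l * cnj S) = t * (cmod S)^2"
        unfolding l_def cmod_power2 by (simp add: power2_eq_square algebra_simps)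
      moreover have "(cmod l)^2 * G = 0" using True by simp
      ultimately have "0 \<le> F - 2 * t * (cmod S)^2" by linarith
      moreover have "2 * t * (cmod S)^2 = F + 1" unfolding t_def using pos by simp
      ultimately show False by simp
    qed
    then show ?thesis using True unfolding S_def F_def[symmetric] G_def[symmetric] by simp
  qed
qed

definition idm :: "nat \<Rightarrow> nat \<Rightarrow> complex" where
  "idm i j = (if i = j then 1 else 0)"

lemma sum_delta1: "i < (n::nat) \<Longrightarrow> (\<Sum>j<n. if i = j then f j else 0) = f i"
  by simp
lemma sum_delta2: "i < (n::nat) \<Longrightarrow> (\<Sum>j<n. if j = i then f j else 0) = f i"
  by simp

lemma form_idm: "form n idm a b = ip n a b"
  unfolding form_def ip_def idm_def
proof (intro sum.cong refl)
  fix i assume i: "i \<in> {..<n}"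
  have "(\<Sum>j<n. cnj (a i) * (if i = j then 1 else 0) * b j) = (\<Sum>j<n. if i = j then cnj (a i) * b j else 0)"
    by (intro sum.cong) auto
  also have "\<dots> = cnj (a i) * b i" using i by (simp only: sum_delta1 lessThan_iff)
  finally show "(\<Sum>j<n. cnj (a i) * (if i = j then 1 else 0) * b j) = cnj (a i) * b i" .
qed

lemma ip_self: "Re (ip n y y) = (\<Sum>i<n. (cmod (y i))^2)"
  unfolding ip_def cmod_power2 by (simp add: power2_eq_square)

lemma ip_self_real: "ip n y y = complex_of_real (Re (ip n y y))"
  unfolding ip_def by (simp add: complex_eq_iff Im_sum)

lemma ip_self_nonneg: "0 \<le> Re (ip n y y)"
  unfolding ip_self by (simp add: sum_nonneg)

lemma hermf_idm: "hermf n idm" unfolding hermf_def idm_def by simp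

lemma ip_cs: "(cmod (ip n a b))^2 \<le> Re (ip n a a) * Re (ip n b b)"
  using form_cs[OF hermf_idm, of n a b] ip_self_nonneg unfolding form_idm by simp

lemma ip_zero:
  assumes "Re (ip n y y) = 0" "i < n" shows "y i = 0"
proof -
  have "(cmod (y i))^2 \<le> (\<Sum>i<n. (cmod (y i))^2)"
    using assms(2) by (intro member_le_sum) auto
  then show ?thesis using assms(1) unfolding ip_self by simp
qed

lemma form_zero_left:
  assumes "\<And>i. i < n \<Longrightarrow> y i = 0" shows "form n B y z = 0"
  unfolding form_def using assms by simp

lemma form_scale:
  "form n B (\<lambda>i. k * y i) (\<lambda>i. k * y i) = cnj k * k * form n B y y"
  unfolding form_def by (simp add: sum_distrib_left mult_ac)

lemma ip_scale:
  "ip n (\<lambda>i. k * y i) (\<lambda>i. k * y i) = cnj k * k * ip n y y"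
  unfolding ip_def by (simp add: sum_distrib_left mult_ac)

lemma form_minus_idm:
  "form n (\<lambda>i j. A i j - k * idm i j) y y = form n A y y - k * ip n y y"
proof -
  have "form n (\<lambda>i j. A i j - k * idm i j) y y = form n A y y - k * form n idm y y"
    unfolding form_def by (simp add: algebra_simps sum_subtractf sum_distrib_left)
  then show ?thesis by (simp add: form_idm)
qed

lemma unitv: assumes "i < n" shows "Re (ip n (\<lambda>j. if j = i then 1 else 0) (\<lambda>j. if j = i then 1 else 0)) = 1"
proof -
  have "ip n (\<lambda>j. if j = i then 1 else 0) (\<lambda>j. if j = i then 1 else 0) = (\<Sum>j<n. if j = i then 1 else 0)"
    unfolding ip_def by (intro sum.cong) auto
  then show ?thesis using assms by simp
qed

lemma form_unitv:
  assumes "i < n"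
  shows "form n B (\<lambda>j. if j = i then 1 else 0) u = (\<Sum>l<n. B i l * u l)"
proof -
  have "form n B (\<lambda>j. if j = i then 1 else 0) u = (\<Sum>j<n. if j = i then (\<Sum>l<n. B j l * u l) else 0)"
    unfolding form_def by (intro sum.cong) auto
  then show ?thesis using assms by simp
qed

lemma form_unitv2:
  assumes "i < n"
  shows "form n B (\<lambda>j. if j = i then 1 else 0) (\<lambda>j. if j = i then 1 else 0) = B i i"
proof -
  have "form n B (\<lambda>j. if j = i then 1 else 0) (\<lambda>j. if j = i then 1 else 0) = (\<Sum>l<n. B i l * (if l = i then 1 else 0))"
    using form_unitv[OF assms] .
  also have "\<dots> = (\<Sum>l<n. if l = i then B i l else 0)" by (intro sum.cong) auto
  finally show ?thesis using assms by simp
qed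

lemma form_as_rows: "form n B u u = (\<Sum>j<n. cnj (u j) * (\<Sum>l<n. B j l * u l))"
  unfolding form_def by (simp add: sum_distrib_left mult_ac)

lemma form_le_trace:
  assumes h: "hermf n B" and psd: "\<And>y. 0 \<le> Re (form n B y y)"
  shows "Re (form n B u u) \<le> Re (\<Sum>j<n. B j j) * Re (ip n u u)"
proof -
  define F where "F = Re (form n B u u)"
  define t where "t = Re (\<Sum>j<n. B j j)"
  define z where "z j = (\<Sum>l<n. B j l * u l)" for j
  have F0: "0 \<le> F" unfolding F_def by (rule psd)
  have Bjj: "0 \<le> Re (B j j)" if "j < n" for j
    using psd[of "\<lambda>i. if i = j then 1 else 0"] form_unitv2[OF that] by simp
  have zj: "(cmod (z j))^2 \<le> Re (B j j) * F" if "j < n" for j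
    using form_cs[OF h psd, of "\<lambda>i. if i = j then 1 else 0" u] form_unitv[OF that, of B u]
      form_unitv2[OF that, of B] unfolding z_def F_def by simp
  have tdef: "t = (\<Sum>j<n. Re (B j j))" unfolding t_def by (simp add: Re_sum)
  have "F \<le> cmod (form n B u u)" unfolding F_def by (rule complex_Re_le_cmod)
  also have "form n B u u = (\<Sum>j<n. cnj (u j) * z j)" unfolding form_as_rows z_def ..
  also have "cmod (\<Sum>j<n. cnj (u j) * z j) \<le> (\<Sum>j<n. cmod (u j) * cmod (z j))"
    by (rule order_trans[OF norm_sum]) (simp add: norm_mult)
  finally have Fle: "F \<le> (\<Sum>j<n. cmod (u j) * cmod (z j))" .
  show ?thesis
  proof (cases "t > 0")
    case True
    have each: "cmod (u j) * cmod (z j) \<le> (t * (cmod (u j))^2 + Re (B j j) * F / t) / 2"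
      if "j < n" for j
    proof -
      have "0 \<le> (t * cmod (u j) - cmod (z j))^2 / t" using True by simp
      then have "2 * (cmod (u j) * cmod (z j)) \<le> t * (cmod (u j))^2 + (cmod (z j))^2 / t"
        using True by (simp add: field_simps power2_eq_square)
      moreover have "(cmod (z j))^2 / t \<le> Re (B j j) * F / t"
        using zj[OF that] True by (simp add: divide_right_mono)
      ultimately show ?thesis by simp
    qed
    have "F \<le> (\<Sum>j<n. (t * (cmod (u j))^2 + Re (B j j) * F / t) / 2)"
      using Fle each by (meson order_trans sum_mono lessThan_iff)
    also have "\<dots> = (t * Re (ip n u u) + F) / 2"
      using True unfolding ip_self tdef[symmetric]
      by (simp add: sum_divide_distrib[symmetric] sum.distrib sum_distrib_left[symmetric]
          sum_distrib_right[symmetric] tdef)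
    finally show ?thesis unfolding F_def[symmetric] t_def[symmetric] by simp
  next
    case False
    have "0 \<le> t" unfolding tdef using Bjj by (intro sum_nonneg) auto
    then have t0: "t = 0" using False by simp
    then have "\<forall>j\<in>{..<n}. Re (B j j) = 0" using tdef Bjj
      by (subst sum_nonneg_eq_0_iff[symmetric]) auto
    then have "\<And>j. j < n \<Longrightarrow> z j = 0" using zj by fastforce
    then have "F \<le> 0" using Fle by simp
    then show ?thesis unfolding F_def[symmetric] t_def[symmetric] t0 by simp
  qed
qed

lemma form_bound:
  assumes "\<And>i. i < n \<Longrightarrow> cmod (y i) \<le> 1"
  shows "Re (form n A y y) \<le> (\<Sum>i<n. \<Sum>j<n. cmod (A i j))"
proof -
  have "Re (form n A y y) \<le> cmod (form n A y y)" by (rule complex_Re_le_cmod)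
  also have "\<dots> \<le> (\<Sum>i<n. cmod (\<Sum>j<n. cnj (y i) * A i j * y j))"
    unfolding form_def by (rule norm_sum)
  also have "\<dots> \<le> (\<Sum>i<n. \<Sum>j<n. cmod (cnj (y i) * A i j * y j))"
    by (intro sum_mono norm_sum)
  also have "\<dots> \<le> (\<Sum>i<n. \<Sum>j<n. cmod (A i j))"
  proof (intro sum_mono)
    fix i j assume i: "i \<in> {..<n}" and j: "j \<in> {..<n}"
    have "cmod (cnj (y i) * A i j * y j) = cmod (y i) * cmod (A i j) * cmod (y j)"
      by (simp add: norm_mult)
    also have "\<dots> \<le> 1 * cmod (A i j) * 1"
      using assms i j by (intro mult_mono) auto
    finally show "cmod (cnj (y i) * A i j * y j) \<le> cmod (A i j)" by simp
  qed
  finally show ?thesis .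
qed

lemma final_bound:
  fixes A :: "nat \<Rightarrow> nat \<Rightarrow> complex" and h :: "(nat \<Rightarrow> complex) \<Rightarrow> nat \<Rightarrow> nat \<Rightarrow> complex"
  assumes n1: "n \<ge> 1" and herm: "hermf n A" and psd: "\<And>y. 0 \<le> Re (form n A y y)"
    and tr: "Re (\<Sum>j<n. A j j) = t" and tpos: "t > 0" and cpos: "c > 0"
    and H1: "\<And>x. c * t * Re (ip n x x) \<le> (\<Sum>m<N. Re (form n A (h x m) (h x m)))"
    and H2: "\<And>x. (\<Sum>m<N. Re (ip n (h x m) (h x m))) = Re (form n A x x)"
  shows "4 * (real n - 1) * c \<le> t"
proof -
  define U where "U = {Re (form n A y y) | y. Re (ip n y y) = 1}"
  define lam where "lam = Sup U"
  define e0 where "e0 = (\<lambda>j. if j = (0::nat) then (1::complex) else 0)"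
  have e0: "Re (ip n e0 e0) = 1" unfolding e0_def using unitv[of 0 n] n1 by simp
  have Une: "U \<noteq> {}" unfolding U_def using e0 by blast
  have Ubdd: "bdd_above U"
  proof (rule bdd_aboveI)
    fix u assume "u \<in> U"
    then obtain y where u: "u = Re (form n A y y)" and y: "Re (ip n y y) = 1"
      unfolding U_def by blast
    have "cmod (y i) \<le> 1" if "i < n" for i
    proof -
      have "(cmod (y i))^2 \<le> (\<Sum>i<n. (cmod (y i))^2)"
        using that by (intro member_le_sum) auto
      then have "(cmod (y i))^2 \<le> 1" using y unfolding ip_self by simp
      then show ?thesis by (simp add: power_le_one_iff)
    qed
    then show "u \<le> (\<Sum>i<n. \<Sum>j<n. cmod (A i j))" unfolding u by (rule form_bound)
  qed
  have le_lam: "Re (form n A y y) \<le> lam * Re (ip n y y)" for y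
  proof (cases "Re (ip n y y) = 0")
    case True
    then have "form n A y y = 0" using ip_zero by (intro form_zero_left) auto
    then show ?thesis using True by simp
  next
    case False
    define s where "s = Re (ip n y y)"
    have s: "s > 0" using False ip_self_nonneg[of n y] unfolding s_def by simp
    define k where "k = complex_of_real (1 / sqrt s)"
    define y' where "y' = (\<lambda>i. k * y i)"
    have ss: "sqrt s * sqrt s = s" using s by simp
    have "cnj k * k = complex_of_real (1/sqrt s * (1/sqrt s))"
      by (simp only: k_def complex_cnj_complex_of_real of_real_mult)
    also have "1/sqrt s * (1/sqrt s) = 1/s" using ss s by (simp add: field_simps)
    finally have kk: "cnj k * k = complex_of_real (1 / s)" .
    have "Re (ip n y' y') = 1"
      unfolding y'_def ip_scale kk using s
      by (subst ip_self_real) (simp add: s_def[symmetric])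
    then have "Re (form n A y' y') \<in> U" unfolding U_def by blast
    then have "Re (form n A y' y') \<le> lam" unfolding lam_def using Ubdd by (rule cSup_upper)
    moreover have "Re (form n A y' y') = Re (form n A y y) / s"
      unfolding y'_def form_scale kk by simp
    ultimately have "Re (form n A y y) / s \<le> lam" by simp
    then show ?thesis using s unfolding s_def[symmetric] by (simp add: field_simps)
  qed
  have key: "c * t * Re (ip n x x) \<le> lam * Re (form n A x x)" for x
  proof -
    have "c * t * Re (ip n x x) \<le> (\<Sum>m<N. Re (form n A (h x m) (h x m)))" by (rule H1)
    also have "\<dots> \<le> (\<Sum>m<N. lam * Re (ip n (h x m) (h x m)))"
      by (intro sum_mono le_lam)
    also have "\<dots> = lam * Re (form n A x x)" by (simp add: sum_distrib_left[symmetric] H2)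
    finally show ?thesis .
  qed
  have lampos: "lam > 0"
  proof (rule ccontr)
    assume "\<not> lam > 0"
    then have "lam * Re (form n A e0 e0) \<le> 0" using psd[of e0]
      by (simp add: mult_nonpos_nonneg)
    moreover have "c * t * Re (ip n e0 e0) > 0" using e0 cpos tpos by simp
    ultimately show False using key[of e0] by simp
  qed
  define m where "m = c * t / lam"
  have mle: "m * Re (ip n y y) \<le> Re (form n A y y)" for y
    using key[of y] lampos unfolding m_def by (simp add: field_simps)
  define B where "B = (\<lambda>i j. A i j - complex_of_real m * idm i j)"
  have formB: "form n B y y = form n A y y - complex_of_real m * ip n y y" for y
    unfolding B_def by (rule form_minus_idm)
  have hB: "hermf n B" unfolding hermf_def
  proof (intro allI impI)
    fix i j assume "i < n" "j < n"
    then have "A j i = cnj (A i j)" using herm unfolding hermf_def by blast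
    then show "B j i = cnj (B i j)" unfolding B_def idm_def by simp
  qed
  have psdB: "0 \<le> Re (form n B y y)" for y
    unfolding formB using mle[of y] by simp
  have trB: "Re (\<Sum>j<n. B j j) = t - real n * m"
    unfolding B_def idm_def using tr by (simp add: sum_subtractf Re_sum)
  have "lam \<le> t - (real n - 1) * m"
    unfolding lam_def
  proof (rule cSup_least[OF Une])
    fix u assume "u \<in> U"
    then obtain y where u: "u = Re (form n A y y)" and y: "Re (ip n y y) = 1"
      unfolding U_def by blast
    have "Re (form n B y y) \<le> (t - real n * m) * 1"
      using form_le_trace[OF hB psdB, of y] trB y by simp
    moreover have "Re (form n B y y) = u - m" using y unfolding formB u by simp
    ultimately show "u \<le> t - (real n - 1) * m" by (simp add: algebra_simps)
  qed
  then have "lam * lam \<le> t * lam - (real n - 1) * c * t"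
    using lampos unfolding m_def by (simp add: field_simps)
  moreover have "t * lam - lam * lam \<le> t * t / 4"
  proof -
    have "0 \<le> (t - 2*lam)^2" by simp
    moreover have "(t - 2*lam)^2 = t*t - 4*(t*lam) + 4*(lam*lam)" by (simp add: power2_eq_square algebra_simps)
    ultimately show ?thesis by linarith
  qed
  ultimately have "(real n - 1) * c * t \<le> t * t / 4" by linarith
  then have "4 * ((real n - 1) * c) * t \<le> t * t" by linarith
  then have "4 * ((real n - 1) * c) \<le> t" using tpos by (simp add: mult_le_cancel_right)
  then show ?thesis by (simp only: mult.assoc)
qed

definition mv :: "nat \<Rightarrow> (nat \<Rightarrow> nat \<Rightarrow> complex) \<Rightarrow> (nat \<Rightarrow> complex) \<Rightarrow> nat \<Rightarrow> complex" where
  "mv n M v = (\<lambda>i. \<Sum>j<n. M i j * v j)"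

definition mm :: "nat \<Rightarrow> (nat \<Rightarrow> nat \<Rightarrow> complex) \<Rightarrow> (nat \<Rightarrow> nat \<Rightarrow> complex) \<Rightarrow> nat \<Rightarrow> nat \<Rightarrow> complex" where
  "mm n A B = (\<lambda>i j. \<Sum>k<n. A i k * B k j)"

lemma mv_mm: "mv n (mm n A B) v i = mv n A (mv n B v) i"
proof -
  have "mv n (mm n A B) v i = (\<Sum>j<n. \<Sum>k<n. A i k * B k j * v j)"
    unfolding mv_def mm_def by (simp add: sum_distrib_right)
  also have "\<dots> = (\<Sum>k<n. \<Sum>j<n. A i k * B k j * v j)" by (rule sum.swap)
  also have "\<dots> = mv n A (mv n B v) i"
    unfolding mv_def by (simp add: sum_distrib_left mult.assoc)
  finally show ?thesis .
qed

lemma mv_mm_fun: "mv n (mm n A B) v = mv n A (mv n B v)"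
  using mv_mm by blast

lemma mv_cong: "(\<And>j. j < n \<Longrightarrow> v j = w j) \<Longrightarrow> mv n M v i = mv n M w i"
  unfolding mv_def by (intro sum.cong) auto

lemma mv_cong_mat: "(\<And>j. j < n \<Longrightarrow> M i j = M' i j) \<Longrightarrow> mv n M v i = mv n M' v i"
  unfolding mv_def by (intro sum.cong) auto

lemma ip_cong: "(\<And>i. i < n \<Longrightarrow> a i = a' i) \<Longrightarrow> (\<And>i. i < n \<Longrightarrow> b i = b' i) \<Longrightarrow> ip n a b = ip n a' b'"
  unfolding ip_def by (intro sum.cong) auto

lemma ip_herm:
  assumes "hermf n M"
  shows "ip n (mv n M a) b = ip n a (mv n M b)"
proof -
  have "ip n (mv n M a) b = (\<Sum>i<n. \<Sum>j<n. cnj (M i j) * cnj (a j) * b i)"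
    unfolding ip_def mv_def by (simp add: sum_distrib_right)
  also have "\<dots> = (\<Sum>j<n. \<Sum>i<n. cnj (M i j) * cnj (a j) * b i)" by (rule sum.swap)
  also have "\<dots> = (\<Sum>j<n. \<Sum>i<n. cnj (a j) * (M j i * b i))"
  proof (intro sum.cong refl)
    fix i j assume "i \<in> {..<n}" "j \<in> {..<n}"
    then have "M j i = cnj (M i j)" using assms unfolding hermf_def by blast
    then show "cnj (M i j) * cnj (a j) * b i = cnj (a j) * (M j i * b i)" by simp
  qed
  also have "\<dots> = ip n a (mv n M b)"
    unfolding ip_def mv_def by (simp add: sum_distrib_left)
  finally show ?thesis .
qed

lemma ip_conj: "ip n b a = cnj (ip n a b)"
  unfolding ip_def by (simp add: mult.commute)

lemma mv_lin: "mv n (\<lambda>i j. k * (X i j - Y i j)) v i = k * (mv n X v i - mv n Y v i)"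
  unfolding mv_def by (simp add: algebra_simps sum_subtractf sum_distrib_left)

lemma mv_diff: "mv n (\<lambda>i j. X i j - Y i j) v i = mv n X v i - mv n Y v i"
  unfolding mv_def by (simp add: algebra_simps sum_subtractf)

lemma ip_lin: "ip n v (\<lambda>i. k * (x i - y i)) = k * (ip n v x - ip n v y)"
  unfolding ip_def by (simp add: algebra_simps sum_subtractf sum_distrib_left)

lemma ip_diff: "ip n v (\<lambda>i. x i - y i) = ip n v x - ip n v y"
  unfolding ip_def by (simp add: algebra_simps sum_subtractf)

lemma ip_diff_self: "ip n (\<lambda>i. a i - b i) (\<lambda>i. a i - b i) = ip n a a - ip n a b - ip n b a + ip n b b"
  using form_expand[of n idm a 1 b] unfolding form_idm by simp

lemma ip_zero_right: "(\<And>i. i < n \<Longrightarrow> y i = 0) \<Longrightarrow> ip n v y = 0"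
  unfolding ip_def by simp

lemma real_stepB1:
  fixes S P q Q :: real
  assumes "0 \<le> S" "0 \<le> P" "0 < Q" "Q^2 * (P - q) = S - P" "P^2 \<le> S * q"
  shows "min 1 (1/Q^2) * S \<le> P"
proof (cases "S \<le> P")
  case True
  have "min 1 (1/Q^2) * S \<le> 1 * S" using assms(1) by (intro mult_right_mono) auto
  then show ?thesis using True by simp
next
  case False
  then have SP: "S - P > 0" and S0: "S > 0" using assms by auto
  have "q \<ge> P^2 / S" using assms(5) S0 by (simp add: field_simps)
  then have "Q^2 * (P - P^2/S) \<ge> Q^2 * (P - q)" using assms(3) by (intro mult_left_mono) auto
  then have "Q^2 * (P - P^2/S) \<ge> S - P" using assms(4) by simp
  moreover have "P - P^2/S = P * (S - P) / S" using S0 by (simp add: field_simps power2_eq_square)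
  ultimately have "Q^2 * P * (S - P) / S \<ge> (S - P)" by (simp add: mult.assoc)
  then have "Q^2 * P * (S - P) \<ge> S * (S - P)" using S0 by (simp add: field_simps)
  then have "Q^2 * P \<ge> S" using SP by (simp add: mult.commute mult_le_cancel_left_pos)
  then have "S / Q^2 \<le> P" using assms(3) by (simp add: field_simps)
  moreover have "min 1 (1/Q^2) * S \<le> (1/Q^2) * S" using assms(1) by (intro mult_right_mono) auto
  ultimately show ?thesis by simp
qed

lemma real_stepB2:
  fixes S P q Q :: real
  assumes "0 \<le> S" "0 \<le> P" "0 < Q" "P = Q^2 * q" "P^2 \<le> S * (P - q)"
  shows "min 1 (1/Q^2) * S \<le> S - P"
proof (cases "P = 0")
  case True
  have "min 1 (1/Q^2) * S \<le> 1 * S" using assms(1) by (intro mult_right_mono) auto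
  then show ?thesis using True by simp
next
  case False
  then have P0: "P > 0" using assms(2) by simp
  have q: "q = P / Q^2" using assms(3,4) by simp
  have "P * P \<le> S * (P - P/Q^2)" using assms(5) unfolding q by (simp add: power2_eq_square)
  also have "S * (P - P/Q^2) = P * (S - S/Q^2)" by (simp add: algebra_simps)
  finally have "P \<le> S - S/Q^2" using P0 by (simp add: mult_le_cancel_left_pos)
  then have "S / Q^2 \<le> S - P" by simp
  moreover have "min 1 (1/Q^2) * S \<le> (1/Q^2) * S" using assms(1) by (intro mult_right_mono) auto
  ultimately show ?thesis by simp
qed

locale twoproj =
  fixes K :: nat and M1 M2 :: "nat \<Rightarrow> nat \<Rightarrow> complex" and Q :: real
  assumes h1: "hermf K M1" and h2: "hermf K M2"
    and i1: "\<And>i j. i < K \<Longrightarrow> j < K \<Longrightarrow> mm K M1 M1 i j = M1 i j"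
    and i2: "\<And>i j. i < K \<Longrightarrow> j < K \<Longrightarrow> mm K M2 M2 i j = M2 i j"
    and eq: "\<And>i j. i < K \<Longrightarrow> j < K \<Longrightarrow>
      complex_of_real (Q^2) * (mm K (mm K M1 M2) M1 i j - mm K (mm K M2 M1) M2 i j) = M1 i j - M2 i j"
    and Qpos: "Q > 0"
begin

lemma eq_ip: "complex_of_real (Q^2) * (ip K v (mv K (mm K (mm K M1 M2) M1) v) - ip K v (mv K (mm K (mm K M2 M1) M2) v))
   = ip K v (mv K M1 v) - ip K v (mv K M2 v)"
proof -
  have "ip K v (mv K (\<lambda>i j. complex_of_real (Q^2) * (mm K (mm K M1 M2) M1 i j - mm K (mm K M2 M1) M2 i j)) v)
      = ip K v (mv K (\<lambda>i j. M1 i j - M2 i j) v)"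
    by (intro ip_cong refl mv_cong_mat eq) auto
  then show ?thesis unfolding mv_lin mv_diff ip_lin ip_diff .
qed

lemma idem_mv1: assumes "i < K" shows "mv K M1 (mv K M1 w) i = mv K M1 w i"
proof -
  have "mv K M1 (mv K M1 w) i = mv K (mm K M1 M1) w i" by (simp add: mv_mm_fun)
  also have "\<dots> = mv K M1 w i" using i1 assms by (intro mv_cong_mat) auto
  finally show ?thesis .
qed

lemma idem_mv2: assumes "i < K" shows "mv K M2 (mv K M2 w) i = mv K M2 w i"
proof -
  have "mv K M2 (mv K M2 w) i = mv K (mm K M2 M2) w i" by (simp add: mv_mm_fun)
  also have "\<dots> = mv K M2 w i" using i2 assms by (intro mv_cong_mat) auto
  finally show ?thesis .
qed

lemma E2: "ip K v (mv K (mm K (mm K M2 M1) M2) v) = ip K (mv K M1 (mv K M2 v)) (mv K M1 (mv K M2 v))"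
proof -
  let ?w = "mv K M2 v"
  have "ip K v (mv K (mm K (mm K M2 M1) M2) v) = ip K v (mv K M2 (mv K M1 ?w))"
    by (simp add: mv_mm_fun)
  also have "\<dots> = ip K ?w (mv K M1 ?w)" using ip_herm[OF h2] by simp
  also have "\<dots> = ip K ?w (mv K M1 (mv K M1 ?w))"
    by (intro ip_cong refl idem_mv1[symmetric])
  also have "\<dots> = ip K (mv K M1 ?w) (mv K M1 ?w)" using ip_herm[OF h1] by simp
  finally show ?thesis .
qed

lemma p_real: "ip K v (mv K M2 v) = ip K (mv K M2 v) (mv K M2 v)"
proof -
  have "ip K (mv K M2 v) (mv K M2 v) = ip K v (mv K M2 (mv K M2 v))" using ip_herm[OF h2] by simp
  also have "\<dots> = ip K v (mv K M2 v)" by (intro ip_cong refl idem_mv2)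
  finally show ?thesis by simp
qed

lemma stepB1:
  assumes v: "\<And>i. i < K \<Longrightarrow> mv K M1 v i = v i"
  shows "min 1 (1/Q^2) * Re (ip K v v) \<le> Re (ip K v (mv K M2 v))"
proof -
  define w where "w = mv K M2 v"
  define u where "u = mv K M1 w"
  have E1: "ip K v (mv K (mm K (mm K M1 M2) M1) v) = ip K v w"
  proof -
    have "ip K v (mv K (mm K (mm K M1 M2) M1) v) = ip K v (mv K M1 (mv K M2 (mv K M1 v)))"
      by (simp add: mv_mm_fun)
    also have "\<dots> = ip K v (mv K M1 w)" unfolding w_def
      by (intro ip_cong refl mv_cong) (simp add: v)
    also have "\<dots> = ip K (mv K M1 v) w" using ip_herm[OF h1] by simp
    also have "\<dots> = ip K v w" by (intro ip_cong refl v)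
    finally show ?thesis .
  qed
  have E3: "ip K v (mv K M1 v) = ip K v v" by (intro ip_cong refl v)
  have main: "complex_of_real (Q^2) * (ip K v w - ip K u u) = ip K v v - ip K v w"
    using eq_ip[of v] unfolding E1 E2 E3 u_def w_def .
  have pw: "ip K v w = ip K w w" unfolding w_def by (rule p_real)
  have vu: "ip K v u = ip K v w"
  proof -
    have "ip K v u = ip K (mv K M1 v) w" unfolding u_def using ip_herm[OF h1] by simp
    also have "\<dots> = ip K v w" by (intro ip_cong refl v)
    finally show ?thesis .
  qed
  define S where "S = Re (ip K v v)"
  define P where "P = Re (ip K v w)"
  define q where "q = Re (ip K u u)"
  have Pr: "ip K v w = complex_of_real P" unfolding P_def pw using ip_self_real .
  have Sr: "ip K v v = complex_of_real S" unfolding S_def using ip_self_real .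
  have qr: "ip K u u = complex_of_real q" unfolding q_def using ip_self_real .
  have eqr: "Q^2 * (P - q) = S - P"
    using arg_cong[OF main, of Re] unfolding Pr Sr qr by simp
  have cs: "(cmod (ip K v u))^2 \<le> S * q" unfolding S_def q_def by (rule ip_cs)
  have P0: "0 \<le> P" unfolding P_def pw by (rule ip_self_nonneg)
  have "P^2 \<le> S * q" using cs unfolding vu Pr using P0 by simp
  then have "min 1 (1/Q^2) * S \<le> P"
    using real_stepB1[OF _ P0 Qpos eqr] ip_self_nonneg unfolding S_def by blast
  then show ?thesis unfolding S_def P_def w_def .
qed

lemma stepB2:
  assumes v: "\<And>i. i < K \<Longrightarrow> mv K M1 v i = 0"
  shows "min 1 (1/Q^2) * Re (ip K v v) \<le> Re (ip K v v) - Re (ip K v (mv K M2 v))"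
proof -
  define w where "w = mv K M2 v"
  define u where "u = mv K M1 w"
  have E1: "ip K v (mv K (mm K (mm K M1 M2) M1) v) = 0"
  proof -
    have "ip K v (mv K (mm K (mm K M1 M2) M1) v) = ip K v (mv K (mm K M1 M2) (mv K M1 v))"
      by (simp add: mv_mm_fun)
    also have "\<dots> = ip K v (mv K (mm K M1 M2) (\<lambda>_. 0))"
      by (intro ip_cong refl mv_cong) (simp add: v)
    also have "\<dots> = 0" by (simp add: mv_def ip_def)
    finally show ?thesis .
  qed
  have E3: "ip K v (mv K M1 v) = 0" by (intro ip_zero_right v)
  have main: "complex_of_real (Q^2) * (0 - ip K u u) = 0 - ip K v w"
    using eq_ip[of v] unfolding E1 E2 E3 u_def w_def .
  have pw: "ip K v w = ip K w w" unfolding w_def by (rule p_real)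
  have vu: "ip K v u = 0"
  proof -
    have "ip K v u = ip K (mv K M1 v) w" unfolding u_def using ip_herm[OF h1] by simp
    also have "\<dots> = 0" unfolding ip_def using v by simp
    finally show ?thesis .
  qed
  have wu: "ip K w u = ip K u u"
  proof -
    have "ip K u u = ip K w (mv K M1 (mv K M1 w))" unfolding u_def using ip_herm[OF h1] by simp
    also have "\<dots> = ip K w u" unfolding u_def by (intro ip_cong refl idem_mv1)
    finally show ?thesis by simp
  qed
  have uw: "ip K u w = ip K u u" using wu ip_conj[of K u w] ip_self_real[of K u]
    by (metis complex_cnj_complex_of_real)
  define S where "S = Re (ip K v v)"
  define P where "P = Re (ip K v w)"
  define q where "q = Re (ip K u u)"
  have Pr: "ip K v w = complex_of_real P" unfolding P_def pw using ip_self_real .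
  have qr: "ip K u u = complex_of_real q" unfolding q_def using ip_self_real .
  have eqr: "P = Q^2 * q"
    using arg_cong[OF main, of Re] unfolding Pr qr by simp
  define z where "z = (\<lambda>i. w i - u i)"
  have vz: "ip K v z = ip K v w" unfolding z_def ip_diff vu by simp
  have zz: "ip K z z = ip K w w - ip K u u" unfolding z_def ip_diff_self wu uw by simp
  have cs: "(cmod (ip K v z))^2 \<le> S * Re (ip K z z)" unfolding S_def by (rule ip_cs)
  have P0: "0 \<le> P" unfolding P_def pw by (rule ip_self_nonneg)
  have "P^2 \<le> S * (P - q)" using cs unfolding vz zz Pr using P0 
    by (simp add: pw[symmetric] Pr q_def)
  then have "min 1 (1/Q^2) * S \<le> S - P"
    using real_stepB2[OF _ P0 Qpos eqr] ip_self_nonneg unfolding S_def by blast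
  then show ?thesis unfolding S_def P_def w_def .
qed

end

lemma swap2: "(\<Sum>a\<in>A. \<Sum>b\<in>B. \<Sum>c\<in>C. f a b c) = (\<Sum>b\<in>B. \<Sum>c\<in>C. \<Sum>a\<in>A. f a b c)"
  by (subst sum.swap) (intro sum.cong refl sum.swap)

lemma swap3: "(\<Sum>a\<in>A. \<Sum>b\<in>B. \<Sum>c\<in>C. \<Sum>d\<in>D. f a b c d) = (\<Sum>b\<in>B. \<Sum>c\<in>C. \<Sum>d\<in>D. \<Sum>a\<in>A. f a b c d)"
  by (subst sum.swap) (intro sum.cong refl swap2)

lemma dm_div: "j < (n::nat) \<Longrightarrow> (i*n+j) div n = i" by simp
lemma dm_mod: "j < (n::nat) \<Longrightarrow> (i*n+j) mod n = j" by simp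

lemma idx3: "i*(n*n) + (j*n + l) = (i*n+j)*n + (l::nat)" by (simp add: algebra_simps)

lemma lt2: "i < n \<Longrightarrow> j < n \<Longrightarrow> i*n + j < n*(n::nat)"
proof -
  assume "i < n" "j < n"
  then have "i*n + j < i*n + n" by simp
  also have "\<dots> = (i+1)*n" by simp
  also have "\<dots> \<le> n*n" using \<open>i<n\<close> by (intro mult_right_mono) auto
  finally show ?thesis .
qed

locale proj =
  fixes n :: nat and p :: "nat \<Rightarrow> nat \<Rightarrow> complex"
  assumes hp: "hermf (n*n) p"
    and ipp: "\<And>i j. i < n*n \<Longrightarrow> j < n*n \<Longrightarrow> mm (n*n) p p i j = p i j"
begin

definition M1 where "M1 a b = p (a div n) (b div n) * (if a mod n = b mod n then 1 else 0)"
definition M2 where "M2 a b = (if a div (n*n) = b div (n*n) then 1 else 0) * p (a mod (n*n)) (b mod (n*n))"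
definition vk where "vk k x a = p (a div n) k * x (a mod n)"
definition A where "A j' j = (\<Sum>i<n. p (i*n+j') (i*n+j))"
definition g where "g x m j = (\<Sum>l<n. p m (j*n+l) * x l)"
definition h where "h x m j = cnj (g x m j)"
definition Y where "Y x j j' = (\<Sum>l<n. \<Sum>l'<n. cnj (x l) * p (j*n+l) (j'*n+l') * x l')"

lemma herm_p: "a < n*n \<Longrightarrow> b < n*n \<Longrightarrow> p b a = cnj (p a b)"
  using hp unfolding hermf_def by blast

lemma contr1: "a < n*n \<Longrightarrow> b < n*n \<Longrightarrow> (\<Sum>k<n*n. cnj (p a k) * p b k) = p b a"
proof -
  assume ab: "a < n*n" "b < n*n"
  have "(\<Sum>k<n*n. cnj (p a k) * p b k) = (\<Sum>k<n*n. p b k * p k a)"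
    using ab by (intro sum.cong refl) (simp add: herm_p[of _ a] mult.commute)
  also have "\<dots> = p b a" using ipp[OF ab(2) ab(1)] unfolding mm_def .
  finally show ?thesis .
qed

lemma contr2: "a < n*n \<Longrightarrow> b < n*n \<Longrightarrow> (\<Sum>m<n*n. cnj (p m a) * p m b) = p a b"
proof -
  assume ab: "a < n*n" "b < n*n"
  have "(\<Sum>m<n*n. cnj (p m a) * p m b) = (\<Sum>m<n*n. p a m * p m b)"
    using ab by (intro sum.cong refl) (simp add: herm_p[of a])
  also have "\<dots> = p a b" using ipp[OF ab] unfolding mm_def .
  finally show ?thesis .
qed

lemma vk_at: "j < n \<Longrightarrow> l < n \<Longrightarrow> vk k x (i*(n*n) + (j*n + l)) = p (i*n+j) k * x l"
  unfolding vk_def idx3 by simp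

lemma M2_mv: assumes a: "a < n*n*n"
  shows "mv (n*n*n) M2 v a = (\<Sum>r<n*n. p (a mod (n*n)) r * v ((a div (n*n))*(n*n) + r))"
proof -
  have ad: "a div (n*n) < n" using a by (simp add: less_mult_imp_div_less mult.assoc)
  have "mv (n*n*n) M2 v a = (\<Sum>b<n*(n*n). M2 a b * v b)" unfolding mv_def by (simp add: mult.assoc)
  also have "\<dots> = (\<Sum>i<n. \<Sum>r<n*n. M2 a (i*(n*n)+r) * v (i*(n*n)+r))" by (rule sum_split_mult)
  also have "\<dots> = (\<Sum>i<n. if a div (n*n) = i then (\<Sum>r<n*n. p (a mod (n*n)) r * v (i*(n*n)+r)) else 0)"
    unfolding M2_def by (intro sum.cong refl) auto
  also have "\<dots> = (\<Sum>r<n*n. p (a mod (n*n)) r * v ((a div (n*n))*(n*n) + r))"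
    using ad by simp
  finally show ?thesis .
qed

lemma ipM2_expand:
  "ip (n*n*n) v (mv (n*n*n) M2 v) =
   (\<Sum>i<n. \<Sum>j<n. \<Sum>l<n. cnj (v (i*(n*n) + (j*n+l))) *
      (\<Sum>j'<n. \<Sum>l'<n. p (j*n+l) (j'*n+l') * v (i*(n*n) + (j'*n+l'))))"
proof -
  have "ip (n*n*n) v (mv (n*n*n) M2 v) = (\<Sum>a<n*(n*n). cnj (v a) * mv (n*n*n) M2 v a)"
    unfolding ip_def by (simp add: mult.assoc)
  also have "\<dots> = (\<Sum>i<n. \<Sum>s<n*n. cnj (v (i*(n*n)+s)) * mv (n*n*n) M2 v (i*(n*n)+s))"
    by (rule sum_split_mult)
  also have "\<dots> = (\<Sum>i<n. \<Sum>s<n*n. cnj (v (i*(n*n)+s)) * (\<Sum>r<n*n. p s r * v (i*(n*n) + r)))"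
  proof (intro sum.cong refl)
    fix i s assume i: "i \<in> {..<n}" and s: "s \<in> {..<n*n}"
    have lt: "i*(n*n)+s < n*n*n"
    proof -
      have "i*(n*n)+s < i*(n*n) + n*n" using s by simp
      also have "\<dots> = (i+1)*(n*n)" by simp
      also have "\<dots> \<le> n*(n*n)" using i by (intro mult_right_mono) auto
      finally show ?thesis by (simp add: mult.assoc)
    qed
    have "(i*(n*n)+s) div (n*n) = i" "(i*(n*n)+s) mod (n*n) = s"
      using dm_div[of s "n*n" i] dm_mod[of s "n*n" i] s by auto
    then show "cnj (v (i*(n*n)+s)) * mv (n*n*n) M2 v (i*(n*n)+s) = cnj (v (i*(n*n)+s)) * (\<Sum>r<n*n. p s r * v (i*(n*n) + r))"
      using M2_mv[OF lt] by simp
  qed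
  also have "\<dots> = (\<Sum>i<n. \<Sum>j<n. \<Sum>l<n. cnj (v (i*(n*n) + (j*n+l))) *
      (\<Sum>j'<n. \<Sum>l'<n. p (j*n+l) (j'*n+l') * v (i*(n*n) + (j'*n+l'))))"
    by (simp only: sum_split_mult)
  finally show ?thesis .
qed

end

lemma div_lt3: "a < n*n*(n::nat) \<Longrightarrow> a div n < n*n"
  by (simp add: less_mult_imp_div_less)

context proj begin

lemma ipk:
  assumes k: "k < n*n"
  shows "ip (n*n*n) (vk k x) (mv (n*n*n) M2 (vk k x)) =
     (\<Sum>i<n. \<Sum>j<n. \<Sum>j'<n. cnj (p (i*n+j) k) * p (i*n+j') k * Y x j j')"
proof -
  have "ip (n*n*n) (vk k x) (mv (n*n*n) M2 (vk k x)) =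
     (\<Sum>i<n. \<Sum>j<n. \<Sum>l<n. cnj (p (i*n+j) k * x l) *
      (\<Sum>j'<n. \<Sum>l'<n. p (j*n+l) (j'*n+l') * (p (i*n+j') k * x l')))"
    unfolding ipM2_expand by (intro sum.cong refl) (simp add: vk_at)
  also have "\<dots> = (\<Sum>i<n. \<Sum>j<n. \<Sum>l<n. \<Sum>j'<n. \<Sum>l'<n.
       cnj (p (i*n+j) k) * p (i*n+j') k * (cnj (x l) * p (j*n+l) (j'*n+l') * x l'))"
    unfolding sum_distrib_left by (intro sum.cong refl; simp add: mult_ac)
  also have "\<dots> = (\<Sum>i<n. \<Sum>j<n. \<Sum>j'<n. \<Sum>l<n. \<Sum>l'<n.
       cnj (p (i*n+j) k) * p (i*n+j') k * (cnj (x l) * p (j*n+l) (j'*n+l') * x l'))"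
    by (intro sum.cong refl sum.swap)
  also have "\<dots> = (\<Sum>i<n. \<Sum>j<n. \<Sum>j'<n. cnj (p (i*n+j) k) * p (i*n+j') k * Y x j j')"
    unfolding Y_def sum_distrib_left by (intro sum.cong refl; simp add: mult_ac)
  finally show ?thesis .
qed

lemma sum_ipk:
  "(\<Sum>k<n*n. ip (n*n*n) (vk k x) (mv (n*n*n) M2 (vk k x))) = (\<Sum>j<n. \<Sum>j'<n. A j' j * Y x j j')"
proof -
  have "(\<Sum>k<n*n. ip (n*n*n) (vk k x) (mv (n*n*n) M2 (vk k x))) =
     (\<Sum>k<n*n. \<Sum>i<n. \<Sum>j<n. \<Sum>j'<n. cnj (p (i*n+j) k) * p (i*n+j') k * Y x j j')"
    by (intro sum.cong refl ipk) simp
  also have "\<dots> = (\<Sum>i<n. \<Sum>j<n. \<Sum>j'<n. \<Sum>k<n*n. cnj (p (i*n+j) k) * p (i*n+j') k * Y x j j')"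
    by (rule swap3)
  also have "\<dots> = (\<Sum>i<n. \<Sum>j<n. \<Sum>j'<n. p (i*n+j') (i*n+j) * Y x j j')"
  proof (intro sum.cong refl)
    fix i j j' assume "i \<in> {..<n}" "j \<in> {..<n}" "j' \<in> {..<n}"
    then have lt: "i*n+j < n*n" "i*n+j' < n*n" by (auto intro: lt2)
    show "(\<Sum>k<n*n. cnj (p (i*n+j) k) * p (i*n+j') k * Y x j j') = p (i*n+j') (i*n+j) * Y x j j'"
      unfolding sum_distrib_right[symmetric] contr1[OF lt] ..
  qed
  also have "\<dots> = (\<Sum>j<n. \<Sum>j'<n. \<Sum>i<n. p (i*n+j') (i*n+j) * Y x j j')"
    by (rule swap2)
  also have "\<dots> = (\<Sum>j<n. \<Sum>j'<n. A j' j * Y x j j')"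
    unfolding A_def sum_distrib_right ..
  finally show ?thesis .
qed

lemma Y_gram:
  assumes "j < n" "j' < n"
  shows "Y x j j' = (\<Sum>m<n*n. cnj (g x m j) * g x m j')"
proof -
  have "(\<Sum>m<n*n. cnj (g x m j) * g x m j') =
        (\<Sum>m<n*n. \<Sum>l<n. \<Sum>l'<n. cnj (p m (j*n+l)) * p m (j'*n+l') * (cnj (x l) * x l'))"
    unfolding g_def cnj_sum sum_product by (intro sum.cong refl; simp add: mult_ac)
  also have "\<dots> = (\<Sum>l<n. \<Sum>l'<n. \<Sum>m<n*n. cnj (p m (j*n+l)) * p m (j'*n+l') * (cnj (x l) * x l'))"
    by (rule swap2)
  also have "\<dots> = (\<Sum>l<n. \<Sum>l'<n. p (j*n+l) (j'*n+l') * (cnj (x l) * x l'))"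
  proof (intro sum.cong refl)
    fix l l' assume "l \<in> {..<n}" "l' \<in> {..<n}"
    then have lt: "j*n+l < n*n" "j'*n+l' < n*n" using assms by (auto intro: lt2)
    show "(\<Sum>m<n*n. cnj (p m (j*n+l)) * p m (j'*n+l') * (cnj (x l) * x l')) = p (j*n+l) (j'*n+l') * (cnj (x l) * x l')"
      unfolding sum_distrib_right[symmetric] contr2[OF lt] ..
  qed
  also have "\<dots> = Y x j j'" unfolding Y_def by (intro sum.cong refl; simp add: mult_ac)
  finally show ?thesis by simp
qed

lemma sum_ipk_form:
  "(\<Sum>k<n*n. ip (n*n*n) (vk k x) (mv (n*n*n) M2 (vk k x))) = (\<Sum>m<n*n. form n A (h x m) (h x m))"
proof -
  have "(\<Sum>j<n. \<Sum>j'<n. A j' j * Y x j j') = (\<Sum>j<n. \<Sum>j'<n. \<Sum>m<n*n. A j' j * (cnj (g x m j) * g x m j'))"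
    by (intro sum.cong refl) (simp add: Y_gram sum_distrib_left)
  also have "\<dots> = (\<Sum>m<n*n. \<Sum>j<n. \<Sum>j'<n. A j' j * (cnj (g x m j) * g x m j'))"
    by (rule swap2[symmetric])
  also have "\<dots> = (\<Sum>m<n*n. \<Sum>j'<n. \<Sum>j<n. A j' j * (cnj (g x m j) * g x m j'))"
    by (intro sum.cong refl sum.swap)
  also have "\<dots> = (\<Sum>m<n*n. form n A (h x m) (h x m))"
    unfolding form_def h_def by (intro sum.cong refl; simp add: mult_ac)
  finally show ?thesis using sum_ipk by simp
qed

lemma R6: "(\<Sum>m<n*n. ip n (h x m) (h x m)) = form n A x x"
proof -
  have "(\<Sum>m<n*n. ip n (h x m) (h x m)) = (\<Sum>m<n*n. \<Sum>j<n. cnj (g x m j) * g x m j)"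
    unfolding ip_def h_def by (intro sum.cong refl) (simp add: mult.commute)
  also have "\<dots> = (\<Sum>j<n. \<Sum>m<n*n. cnj (g x m j) * g x m j)" by (rule sum.swap)
  also have "\<dots> = (\<Sum>j<n. Y x j j)" by (intro sum.cong refl Y_gram[symmetric]) auto
  also have "\<dots> = (\<Sum>j<n. \<Sum>l<n. \<Sum>l'<n. cnj (x l) * p (j*n+l) (j*n+l') * x l')"
    unfolding Y_def ..
  also have "\<dots> = (\<Sum>l<n. \<Sum>l'<n. \<Sum>j<n. cnj (x l) * p (j*n+l) (j*n+l') * x l')"
    by (rule swap2)
  also have "\<dots> = form n A x x"
    unfolding form_def A_def sum_distrib_left sum_distrib_right ..
  finally show ?thesis .
qed

lemma A_herm: "hermf n A"
  unfolding hermf_def A_def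
proof (intro allI impI)
  fix i j assume "i < n" "j < n"
  then show "(\<Sum>ia<n. p (ia*n+j) (ia*n+i)) = cnj (\<Sum>ia<n. p (ia*n+i) (ia*n+j))"
    unfolding cnj_sum by (intro sum.cong refl herm_p) (auto intro: lt2)
qed

lemma A_trace: "(\<Sum>j<n. A j j) = (\<Sum>a<n*n. p a a)"
  unfolding A_def sum_split_mult by (rule sum.swap)

lemma A_psd: "0 \<le> Re (form n A y y)"
  unfolding R6[symmetric] Re_sum by (intro sum_nonneg ip_self_nonneg)

lemma R4: "(\<Sum>k<n*n. ip (n*n*n) (vk k x) (vk k x)) = (\<Sum>a<n*n. p a a) * ip n x x"
proof -
  have "ip (n*n*n) (vk k x) (vk k x) = (\<Sum>m<n*n. cnj (p m k) * p m k) * ip n x x" for k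
  proof -
    have "ip (n*n*n) (vk k x) (vk k x) = (\<Sum>m<n*n. \<Sum>l<n. cnj (vk k x (m*n+l)) * vk k x (m*n+l))"
      unfolding ip_def by (rule sum_split_mult)
    also have "\<dots> = (\<Sum>m<n*n. \<Sum>l<n. cnj (p m k) * p m k * (cnj (x l) * x l))"
      unfolding vk_def by (intro sum.cong refl; simp add: mult_ac)
    also have "\<dots> = (\<Sum>m<n*n. cnj (p m k) * p m k) * ip n x x"
      unfolding ip_def sum_product ..
    finally show ?thesis .
  qed
  then have "(\<Sum>k<n*n. ip (n*n*n) (vk k x) (vk k x)) = (\<Sum>k<n*n. \<Sum>m<n*n. cnj (p m k) * p m k) * ip n x x"
    by (simp add: sum_distrib_right)
  also have "(\<Sum>k<n*n. \<Sum>m<n*n. cnj (p m k) * p m k) = (\<Sum>k<n*n. p k k)"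
  proof (intro sum.cong refl)
    fix k assume k: "k \<in> {..<n*n}"
    have "(\<Sum>m<n*n. cnj (p m k) * p m k) = (\<Sum>m<n*n. p k m * p m k)"
      using k by (intro sum.cong refl) (simp add: herm_p[of _ k])
    also have "\<dots> = p k k" using ipp k unfolding mm_def by simp
    finally show "(\<Sum>m<n*n. cnj (p m k) * p m k) = p k k" .
  qed
  finally show ?thesis .
qed

lemma M1_vec:
  assumes a: "a < n*n*n" and n0: "n > 0"
  shows "mv (n*n*n) M1 (\<lambda>b. q (b div n) * x (b mod n)) a = (\<Sum>m<n*n. p (a div n) m * q m) * x (a mod n)"
proof -
  have am: "a mod n < n" using n0 by simp
  have "mv (n*n*n) M1 (\<lambda>b. q (b div n) * x (b mod n)) a =
      (\<Sum>m<n*n. \<Sum>l<n. M1 a (m*n+l) * (q m * x l))"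
    unfolding mv_def sum_split_mult by (intro sum.cong refl) simp
  also have "\<dots> = (\<Sum>m<n*n. \<Sum>l<n. if a mod n = l then p (a div n) m * q m * x l else 0)"
    unfolding M1_def by (intro sum.cong refl) auto
  also have "\<dots> = (\<Sum>m<n*n. p (a div n) m * q m * x (a mod n))"
    using am by simp
  also have "\<dots> = (\<Sum>m<n*n. p (a div n) m * q m) * x (a mod n)"
    by (simp add: sum_distrib_right)
  finally show ?thesis .
qed

lemma vk_fix:
  assumes a: "a < n*n*n" and n0: "n > 0" and k: "k < n*n"
  shows "mv (n*n*n) M1 (vk k x) a = vk k x a"
proof -
  have "mv (n*n*n) M1 (vk k x) a = (\<Sum>m<n*n. p (a div n) m * p m k) * x (a mod n)"
    unfolding vk_def by (rule M1_vec[OF a n0])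
  also have "(\<Sum>m<n*n. p (a div n) m * p m k) = p (a div n) k"
    using ipp[OF div_lt3[OF a] k] unfolding mm_def .
  finally show ?thesis unfolding vk_def .
qed

lemma M1_herm: "hermf (n*n*n) M1"
  unfolding hermf_def M1_def
proof (intro allI impI)
  fix i j assume "i < n*n*n" "j < n*n*n"
  then have "p (j div n) (i div n) = cnj (p (i div n) (j div n))"
    by (intro herm_p div_lt3)
  then show "p (j div n) (i div n) * (if j mod n = i mod n then 1 else 0) =
    cnj (p (i div n) (j div n) * (if i mod n = j mod n then 1 else 0))" by simp
qed

lemma M2_herm: "hermf (n*n*n) M2"
  unfolding hermf_def M2_def
proof (intro allI impI)
  fix i j assume "i < n*n*n" "j < n*n*n"
  have "n*n > 0 \<or> n = 0" by auto
  then have "p (j mod (n*n)) (i mod (n*n)) = cnj (p (i mod (n*n)) (j mod (n*n)))"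
    using \<open>i < n*n*n\<close> by (auto intro: herm_p)
  then show "(if j div (n*n) = i div (n*n) then 1 else 0) * p (j mod (n*n)) (i mod (n*n)) =
    cnj ((if i div (n*n) = j div (n*n) then 1 else 0) * p (i mod (n*n)) (j mod (n*n)))" by simp
qed

lemma M1_idem:
  assumes a: "a < n*n*n" and b: "b < n*n*n" and n0: "n > 0"
  shows "mm (n*n*n) M1 M1 a b = M1 a b"
proof -
  have "mm (n*n*n) M1 M1 a b = mv (n*n*n) M1 (\<lambda>c. p (c div n) (b div n) * (if c mod n = b mod n then 1 else 0)) a"
    unfolding mm_def mv_def M1_def[of _ b] ..
  also have "\<dots> = (\<Sum>m<n*n. p (a div n) m * p m (b div n)) * (if a mod n = b mod n then 1 else 0)"
    by (rule M1_vec[OF a n0])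
  also have "(\<Sum>m<n*n. p (a div n) m * p m (b div n)) = p (a div n) (b div n)"
    using ipp[OF div_lt3[OF a] div_lt3[OF b]] unfolding mm_def .
  finally show ?thesis unfolding M1_def .
qed

lemma M2_idem:
  assumes a: "a < n*n*n" and b: "b < n*n*n"
  shows "mm (n*n*n) M2 M2 a b = M2 a b"
proof -
  have "mm (n*n*n) M2 M2 a b = mv (n*n*n) M2 (\<lambda>c. M2 c b) a"
    unfolding mm_def mv_def ..
  also have "\<dots> = (\<Sum>r<n*n. p (a mod (n*n)) r * M2 ((a div (n*n))*(n*n) + r) b)"
    by (rule M2_mv[OF a])
  also have "\<dots> = (\<Sum>r<n*n. (if a div (n*n) = b div (n*n) then 1 else 0) * (p (a mod (n*n)) r * p r (b mod (n*n))))"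
    unfolding M2_def by (intro sum.cong refl) (auto simp: dm_div dm_mod)
  also have "\<dots> = M2 a b"
  proof -
    have n0: "n > 0" using a by (cases n) auto
    then show ?thesis
      unfolding M2_def sum_distrib_left[symmetric] using ipp[of "a mod (n*n)" "b mod (n*n)"]
      by (auto simp: mm_def)
  qed
  finally show ?thesis .
qed

lemma stepC:
  assumes n1: "n \<ge> 1" and c: "c > 0" and t: "Re (\<Sum>a<n*n. p a a) > 0"
    and H: "\<And>k x. k < n*n \<Longrightarrow> c * Re (ip (n*n*n) (vk k x) (vk k x)) \<le> Re (ip (n*n*n) (vk k x) (mv (n*n*n) M2 (vk k x)))"
  shows "4 * (real n - 1) * c \<le> Re (\<Sum>a<n*n. p a a)"
proof (rule final_bound[OF n1 A_herm A_psd _ t c])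
  show "Re (\<Sum>j<n. A j j) = Re (\<Sum>a<n*n. p a a)" unfolding A_trace ..
  show "(\<Sum>m<n*n. Re (ip n (h x m) (h x m))) = Re (form n A x x)" for x
    unfolding R6[symmetric] Re_sum ..
  show "c * Re (\<Sum>a<n*n. p a a) * Re (ip n x x) \<le> (\<Sum>m<n*n. Re (form n A (h x m) (h x m)))" for x
  proof -
    have "c * Re (\<Sum>a<n*n. p a a) * Re (ip n x x) = c * Re ((\<Sum>a<n*n. p a a) * ip n x x)"
      by (subst (2) ip_self_real) simp
    also have "\<dots> = c * (\<Sum>k<n*n. Re (ip (n*n*n) (vk k x) (vk k x)))"
      unfolding R4[symmetric] Re_sum ..
    also have "\<dots> \<le> (\<Sum>k<n*n. Re (ip (n*n*n) (vk k x) (mv (n*n*n) M2 (vk k x))))"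
      unfolding sum_distrib_left by (intro sum_mono H) simp
    also have "\<dots> = (\<Sum>m<n*n. Re (form n A (h x m) (h x m)))"
      unfolding Re_sum[symmetric] sum_ipk_form ..
    finally show ?thesis .
  qed
qed

end

lemma idm_sum_left: "i < (N::nat) \<Longrightarrow> (\<Sum>k<N. idm i k * f k) = f i"
proof -
  assume i: "i < N"
  have "(\<Sum>k<N. idm i k * f k) = (\<Sum>k<N. if i = k then f k else 0)"
    unfolding idm_def by (intro sum.cong refl) auto
  then show ?thesis using i by simp
qed

lemma idm_sum_right: "j < (N::nat) \<Longrightarrow> (\<Sum>k<N. f k * idm k j) = f j"
proof -
  assume j: "j < N"
  have "(\<Sum>k<N. f k * idm k j) = (\<Sum>k<N. if k = j then f k else 0)"
    unfolding idm_def by (intro sum.cong refl) auto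
  then show ?thesis using j by simp
qed

lemma idm_sum_right2: "j < (N::nat) \<Longrightarrow> (\<Sum>k<N. idm k j * f k) = f j"
  using idm_sum_right[of j N f] by (simp add: mult.commute)

lemma idm_sum_left2: "i < (N::nat) \<Longrightarrow> (\<Sum>k<N. f k * idm i k) = f i"
  using idm_sum_left[of i N f] by (simp add: mult.commute)

context proj begin

definition pc where "pc a b = idm a b - p a b"

lemma proj_pc: "proj n pc"
proof
  show "hermf (n*n) pc"
    unfolding hermf_def pc_def
  proof (intro allI impI)
    fix i j assume "i < n*n" "j < n*n"
    then have "p j i = cnj (p i j)" by (intro herm_p)
    then show "idm j i - p j i = cnj (idm i j - p i j)" by (simp add: idm_def)
  qed
  fix i j assume i: "i < n*n" and j: "j < n*n"
  have "mm (n*n) pc pc i j = (\<Sum>k<n*n. idm i k * idm k j - idm i k * p k j - p i k * idm k j + p i k * p k j)"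
    unfolding mm_def pc_def by (intro sum.cong refl) (simp add: algebra_simps)
  also have "\<dots> = idm i j - p i j - p i j + p i j"
    using i j ipp[OF i j] unfolding mm_def
    by (simp add: sum.distrib sum_subtractf idm_sum_left idm_sum_right idm_sum_left2 idm_sum_right2)
  also have "\<dots> = pc i j" unfolding pc_def by simp
  finally show "mm (n*n) pc pc i j = pc i j" .
qed

lemma trace_pc: "(\<Sum>a<n*n. pc a a) = of_nat (n*n) - (\<Sum>a<n*n. p a a)"
  unfolding pc_def idm_def by (simp add: sum_subtractf)

lemma pc_vk_kill:
  assumes a: "a < n*n*n" and n0: "n > 0" and k: "k < n*n"
  shows "mv (n*n*n) M1 (proj.vk n pc k x) a = 0"
proof -
  have "mv (n*n*n) M1 (proj.vk n pc k x) a = (\<Sum>m<n*n. p (a div n) m * pc m k) * x (a mod n)"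
    unfolding proj.vk_def[OF proj_pc] by (rule M1_vec[OF a n0])
  also have "(\<Sum>m<n*n. p (a div n) m * pc m k) = 0"
    using ipp[OF div_lt3[OF a] k] div_lt3[OF a] unfolding pc_def mm_def
    by (simp add: algebra_simps sum_subtractf idm_sum_right idm_sum_right2 k)
  finally show ?thesis by simp
qed

lemma M2_pc:
  assumes a: "a < n*n*n" and b: "b < n*n*n"
  shows "proj.M2 n pc a b = idm a b - M2 a b"
proof -
  have "(a div (n*n) = b div (n*n) \<and> a mod (n*n) = b mod (n*n)) \<longleftrightarrow> a = b"
    by (metis div_mult_mod_eq)
  then show ?thesis
    unfolding proj.M2_def[OF proj_pc] M2_def pc_def idm_def by auto
qed

lemma mv_M2_pc:
  assumes a: "a < n*n*n"
  shows "mv (n*n*n) (proj.M2 n pc) v a = v a - mv (n*n*n) M2 v a"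
proof -
  have "mv (n*n*n) (proj.M2 n pc) v a = mv (n*n*n) (\<lambda>a b. idm a b - M2 a b) v a"
    using a M2_pc by (intro mv_cong_mat) auto
  also have "\<dots> = mv (n*n*n) idm v a - mv (n*n*n) M2 v a" by (rule mv_diff)
  also have "mv (n*n*n) idm v a = v a" unfolding mv_def using idm_sum_left[OF a] .
  finally show ?thesis .
qed

lemma tr_pos:
  assumes a: "a < n*n" and b: "b < n*n" and nz: "p a b \<noteq> 0"
  shows "Re (\<Sum>i<n*n. p i i) > 0"
proof -
  have diag: "Re (p i i) = (\<Sum>m<n*n. (cmod (p m i))^2)" if i: "i < n*n" for i
  proof -
    have "p i i = (\<Sum>m<n*n. cnj (p m i) * p m i)" using contr2[OF i i] by simp
    then show ?thesis unfolding cmod_power2 by (simp add: Re_sum power2_eq_square)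
  qed
  have "(cmod (p a b))^2 \<le> (\<Sum>m<n*n. (cmod (p m b))^2)" using a by (intro member_le_sum) auto
  also have "\<dots> = Re (p b b)" using diag[OF b] by simp
  also have "\<dots> \<le> (\<Sum>i<n*n. Re (p i i))"
    using b by (intro member_le_sum) (auto simp: diag sum_nonneg)
  finally have le: "(cmod (p a b))^2 \<le> (\<Sum>i<n*n. Re (p i i))" .
  have pos: "(cmod (p a b))^2 > 0" using nz by simp
  show ?thesis unfolding Re_sum using le pos by linarith
qed

end

lemma main_fun:
  assumes pr: "proj n p" and n2: "n \<ge> 2" and Q0: "0 < Q"
    and eq: "\<And>a b. a < n*n*n \<Longrightarrow> b < n*n*n \<Longrightarrow>
      complex_of_real (Q^2) * (mm (n*n*n) (mm (n*n*n) (proj.M1 n p) (proj.M2 n p)) (proj.M1 n p) a b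
        - mm (n*n*n) (mm (n*n*n) (proj.M2 n p) (proj.M1 n p)) (proj.M2 n p) a b)
      = proj.M1 n p a b - proj.M2 n p a b"
  shows "Re (\<Sum>a<n*n. p a a) > 0 \<Longrightarrow> 4 * (real n - 1) * min 1 (1/Q^2) \<le> Re (\<Sum>a<n*n. p a a)"
    and "Re (\<Sum>a<n*n. p a a) < real (n*n) \<Longrightarrow> 4 * (real n - 1) * min 1 (1/Q^2) \<le> real (n*n) - Re (\<Sum>a<n*n. p a a)"
proof -
  interpret proj n p by (rule pr)
  interpret tp: twoproj "n*n*n" M1 M2 Q
  proof
    show "hermf (n*n*n) M1" by (rule M1_herm)
    show "hermf (n*n*n) M2" by (rule M2_herm)
    show "mm (n*n*n) M1 M1 i j = M1 i j" if "i < n*n*n" "j < n*n*n" for i j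
      using M1_idem that n2 by simp
    show "mm (n*n*n) M2 M2 i j = M2 i j" if "i < n*n*n" "j < n*n*n" for i j
      using M2_idem that by simp
    show "complex_of_real (Q^2) * (mm (n*n*n) (mm (n*n*n) M1 M2) M1 i j - mm (n*n*n) (mm (n*n*n) M2 M1) M2 i j) = M1 i j - M2 i j"
      if "i < n*n*n" "j < n*n*n" for i j using eq that by simp
    show "Q > 0" by (rule Q0)
  qed
  have n0: "n > 0" "n \<ge> 1" using n2 by auto
  have c0: "min 1 (1/Q^2) > 0" using Q0 by simp
  show "4 * (real n - 1) * min 1 (1/Q^2) \<le> Re (\<Sum>a<n*n. p a a)" if t: "Re (\<Sum>a<n*n. p a a) > 0"
  proof (rule stepC[OF n0(2) c0 t])
    fix k x assume k: "k < n*n"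
    show "min 1 (1/Q^2) * Re (ip (n*n*n) (vk k x) (vk k x)) \<le> Re (ip (n*n*n) (vk k x) (mv (n*n*n) M2 (vk k x)))"
      by (rule tp.stepB1) (rule vk_fix[OF _ n0(1) k])
  qed
  show "4 * (real n - 1) * min 1 (1/Q^2) \<le> real (n*n) - Re (\<Sum>a<n*n. p a a)" if t: "Re (\<Sum>a<n*n. p a a) < real (n*n)"
  proof -
    interpret pcp: proj n pc by (rule proj_pc)
    have tr: "Re (\<Sum>a<n*n. pc a a) = real (n*n) - Re (\<Sum>a<n*n. p a a)"
      unfolding trace_pc by simp
    have "4 * (real n - 1) * min 1 (1/Q^2) \<le> Re (\<Sum>a<n*n. pc a a)"
    proof (rule pcp.stepC[OF n0(2) c0])
      show "Re (\<Sum>a<n*n. pc a a) > 0" unfolding tr using t by simp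
      fix k x assume k: "k < n*n"
      let ?v = "pcp.vk k x"
      have "min 1 (1/Q^2) * Re (ip (n*n*n) ?v ?v) \<le> Re (ip (n*n*n) ?v ?v) - Re (ip (n*n*n) ?v (mv (n*n*n) M2 ?v))"
        by (rule tp.stepB2) (rule pc_vk_kill[OF _ n0(1) k])
      also have "Re (ip (n*n*n) ?v ?v) - Re (ip (n*n*n) ?v (mv (n*n*n) M2 ?v)) = Re (ip (n*n*n) ?v (mv (n*n*n) pcp.M2 ?v))"
      proof -
        have "ip (n*n*n) ?v (mv (n*n*n) pcp.M2 ?v) = ip (n*n*n) ?v (\<lambda>a. ?v a - mv (n*n*n) M2 ?v a)"
          by (intro ip_cong refl mv_M2_pc)
        then show ?thesis unfolding ip_diff by simp
      qed
      finally show "min 1 (1/Q^2) * Re (ip (n*n*n) ?v ?v) \<le> Re (ip (n*n*n) ?v (mv (n*n*n) pcp.M2 ?v))" .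
    qed
    then show ?thesis unfolding tr .
  qed
qed

lemma Q_arith1:
  fixes Q :: real assumes "0 < Q" "Q \<le> 2" shows "min 1 (1/Q^2) \<ge> 1/4"
proof -
  have "Q^2 \<le> 2^2" using assms by (intro power_mono) auto
  then have "1/Q^2 \<ge> 1/4" using assms by (simp add: field_simps)
  then show ?thesis by simp
qed

lemma Q_arith2:
  fixes Q :: real assumes "0 < Q" "Q \<le> 2" "4 * min 1 (1/Q^2) \<le> 1" shows "Q = 2"
proof -
  have "1/Q^2 \<le> 1/4" using assms(3) by (simp add: min_def split: if_splits)
  then have "Q^2 \<ge> 4" using assms(1) by (simp add: field_simps)
  then have "Q^2 \<ge> 2^2" by simp
  then have "Q \<ge> 2" using assms(1) by (metis abs_of_pos power2_le_imp_le real_sqrt_abs real_sqrt_le_mono abs_of_nonneg zero_le_numeral)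
  then show ?thesis using assms(2) by simp
qed

lemma mult_entries:
  fixes X Y :: "complex mat"
  assumes X: "X \<in> carrier_mat K K" and Y: "Y \<in> carrier_mat K K"
    and fx: "\<And>a b. a < K \<Longrightarrow> b < K \<Longrightarrow> X $$ (a,b) = f a b"
    and gy: "\<And>a b. a < K \<Longrightarrow> b < K \<Longrightarrow> Y $$ (a,b) = g a b"
    and a: "a < K" and b: "b < K"
  shows "(X * Y) $$ (a,b) = mm K f g a b"
  using X Y a b unfolding mm_def
  by (auto simp: scalar_prod_def lessThan_atLeast0 fx gy intro!: sum.cong)

lemma bridge_herm:
  fixes P :: "complex mat"
  assumes P: "P \<in> carrier_mat N N" and herm: "mat_adjoint P = P"
  shows "hermf N (\<lambda>i j. P $$ (i,j))"
  unfolding hermf_def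
proof (intro allI impI)
  fix i j assume i: "i < N" and j: "j < N"
  have "P $$ (j,i) = mat_adjoint P $$ (j,i)" using herm by simp
  also have "\<dots> = (map conjugate (cols P) ! j) $ i"
    unfolding mat_adjoint_def using P i j by (subst mat_of_rows_index) auto
  also have "\<dots> = cnj (P $$ (i,j))" using P i j by simp
  finally show "P $$ (j,i) = cnj (P $$ (i,j))" .
qed

lemma bridge_idem:
  fixes P :: "complex mat"
  assumes P: "P \<in> carrier_mat N N" and idem: "P * P = P" and i: "i < N" and j: "j < N"
  shows "mm N (\<lambda>i j. P $$ (i,j)) (\<lambda>i j. P $$ (i,j)) i j = P $$ (i,j)"
  using mult_entries[OF P P _ _ i j, of "\<lambda>i j. P $$ (i,j)" "\<lambda>i j. P $$ (i,j)"] idem by simp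

lemma kron1_entry:
  fixes P :: "complex mat"
  assumes P: "P \<in> carrier_mat (n*n) (n*n)" and a: "a < n*n*n" and b: "b < n*n*n"
  shows "kron P (1\<^sub>m n) $$ (a,b) = P $$ (a div n, b div n) * (if a mod n = b mod n then 1 else 0)"
proof -
  have n0: "n > 0" using a by (cases n) auto
  show ?thesis unfolding kron_def using P a b n0 by (simp add: mult.assoc)
qed

lemma kron2_entry:
  fixes P :: "complex mat"
  assumes P: "P \<in> carrier_mat (n*n) (n*n)" and a: "a < n*n*n" and b: "b < n*n*n"
  shows "kron (1\<^sub>m n) P $$ (a,b) = (if a div (n*n) = b div (n*n) then 1 else 0) * P $$ (a mod (n*n), b mod (n*n))"
proof -
  have ad: "a div (n*n) < n" "b div (n*n) < n" using a b by (simp_all add: less_mult_imp_div_less mult.assoc)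
  show ?thesis unfolding kron_def using P a b ad by (simp add: mult.assoc)
qed

lemma kron1_carrier: "P \<in> carrier_mat (n*n) (n*n) \<Longrightarrow> kron P (1\<^sub>m n) \<in> carrier_mat (n*n*n) (n*n*n)"
  unfolding kron_def by simp

lemma kron2_carrier: "P \<in> carrier_mat (n*n) (n*n) \<Longrightarrow> kron (1\<^sub>m n) P \<in> carrier_mat (n*n*n) (n*n*n)"
  unfolding kron_def by (simp add: mult.assoc)

theorem proposition9:
  fixes n r :: nat and Q :: real and P :: "complex mat"
  assumes n2: "n \<ge> 2"
    and Qpos: "0 < Q" and Qle: "Q \<le> 2"
    and Pdim: "P \<in> carrier_mat (n * n) (n * n)"
    and herm: "mat_adjoint P = P"
    and idem: "P * P = P"
    and eqn: "complex_of_real (Q ^ 2) \<cdot>\<^sub>m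
                (kron P (1\<^sub>m n) * kron (1\<^sub>m n) P * kron P (1\<^sub>m n)
                 - kron (1\<^sub>m n) P * kron P (1\<^sub>m n) * kron (1\<^sub>m n) P)
              = kron P (1\<^sub>m n) - kron (1\<^sub>m n) P"
    and nontriv: "P \<noteq> 0\<^sub>m (n * n) (n * n)" "P \<noteq> kron (1\<^sub>m n) (1\<^sub>m n)"
    and rk: "vec_space.rank (n * n) P = r"
  shows "(n \<ge> 2 * r \<longrightarrow> Q = 2 \<and> n = 2 \<and> r = 1)
       \<and> (2 * r \<ge> 2 * n ^ 2 - n \<longrightarrow> Q = 2 \<and> n = 2 \<and> r = 3)"
proof -
  define p where "p = (\<lambda>i j. P $$ (i,j))"
  have pr: "proj n p"
  proof
    show "hermf (n*n) p" unfolding p_def by (rule bridge_herm[OF Pdim herm])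
    show "mm (n*n) p p i j = p i j" if "i < n*n" "j < n*n" for i j
      unfolding p_def by (rule bridge_idem[OF Pdim idem that])
  qed
  interpret proj n p by (rule pr)
  define K where "K = n*n*n"
  have C1: "kron P (1\<^sub>m n) \<in> carrier_mat K K" unfolding K_def by (rule kron1_carrier[OF Pdim])
  have C2: "kron (1\<^sub>m n) P \<in> carrier_mat K K" unfolding K_def by (rule kron2_carrier[OF Pdim])
  have E1: "kron P (1\<^sub>m n) $$ (a,b) = M1 a b" if "a < K" "b < K" for a b
    unfolding M1_def unfolding p_def using kron1_entry[OF Pdim] that unfolding K_def by simp
  have E2: "kron (1\<^sub>m n) P $$ (a,b) = M2 a b" if "a < K" "b < K" for a b
    unfolding M2_def unfolding p_def using kron2_entry[OF Pdim] that unfolding K_def by simp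
  have eqf: "complex_of_real (Q^2) * (mm K (mm K M1 M2) M1 a b - mm K (mm K M2 M1) M2 a b) = M1 a b - M2 a b"
    if a: "a < K" and b: "b < K" for a b
  proof -
    let ?X = "kron P (1\<^sub>m n)" and ?Y = "kron (1\<^sub>m n) P"
    have XY: "?X * ?Y \<in> carrier_mat K K" using C1 C2 by simp
    have YX: "?Y * ?X \<in> carrier_mat K K" using C1 C2 by simp
    have XYX: "(?X * ?Y * ?X) $$ (a,b) = mm K (mm K M1 M2) M1 a b"
      by (rule mult_entries[OF XY C1 _ E1 a b]) (rule mult_entries[OF C1 C2 E1 E2])
    have YXY: "(?Y * ?X * ?Y) $$ (a,b) = mm K (mm K M2 M1) M2 a b"
      by (rule mult_entries[OF YX C2 _ E2 a b]) (rule mult_entries[OF C2 C1 E2 E1])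
    have "(complex_of_real (Q ^ 2) \<cdot>\<^sub>m (?X * ?Y * ?X - ?Y * ?X * ?Y)) $$ (a,b) = (?X - ?Y) $$ (a,b)"
      using eqn by simp
    then show ?thesis using C1 C2 a b XYX YXY E1 E2 by simp
  qed
  note mf = main_fun[OF pr n2 Qpos eqf[unfolded K_def]]
  define t where "t = Re (\<Sum>a<n*n. p a a)"
  have tr: "t = real r"
  proof -
    have "of_nat r = (\<Sum>i<n*n. P $$ (i,i))" using rank_idem_trace[OF Pdim idem] rk by simp
    then show ?thesis unfolding t_def p_def by (metis Re_complex_of_real of_real_of_nat_eq)
  qed
  have tpos: "t > 0"
  proof -
    obtain a b where ab: "a < n*n" "b < n*n" "P $$ (a,b) \<noteq> 0"
    proof (rule ccontr)
      assume "\<not> thesis"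
      then have "\<forall>a<n*n. \<forall>b<n*n. P $$ (a,b) = 0" using that by blast
      then have "P = 0\<^sub>m (n*n) (n*n)" using Pdim by (intro eq_matI) auto
      then show False using nontriv(1) by simp
    qed
    then show ?thesis unfolding t_def using tr_pos[of a b] unfolding p_def by blast
  qed
  have tlt: "t < real (n*n)"
  proof -
    interpret pcp: proj n pc by (rule proj_pc)
    obtain a b where ab: "a < n*n" "b < n*n" "pc a b \<noteq> 0"
    proof (rule ccontr)
      assume "\<not> thesis"
      then have z: "\<forall>a<n*n. \<forall>b<n*n. pc a b = 0" using that by blast
      have "P = kron (1\<^sub>m n) (1\<^sub>m n)"
      proof (rule eq_matI)
        fix a b assume "a < dim_row (kron (1\<^sub>m n) (1\<^sub>m n))" "b < dim_col (kron (1\<^sub>m n) (1\<^sub>m n))"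
        then have a: "a < n*n" and b: "b < n*n" unfolding kron_def by auto
        have n0: "n > 0" using a by (cases n) auto
        have "(a div n = b div n \<and> a mod n = b mod n) \<longleftrightarrow> a = b" by (metis div_mult_mod_eq)
        then have "kron (1\<^sub>m n) (1\<^sub>m n) $$ (a,b) = idm a b"
          unfolding kron_def idm_def using a b n0 by (auto simp: less_mult_imp_div_less)
        moreover have "pc a b = 0" using z a b by blast
        then have "idm a b - P $$ (a,b) = 0" unfolding pc_def unfolding p_def .
        ultimately show "P $$ (a,b) = kron (1\<^sub>m n) (1\<^sub>m n) $$ (a,b)" by simp
      qed (use Pdim in \<open>auto simp: kron_def\<close>)
      then show False using nontriv(2) by simp
    qed
    then have "Re (\<Sum>i<n*n. pc i i) > 0" using pcp.tr_pos by blast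
    then show ?thesis unfolding trace_pc t_def by simp
  qed
  have c4: "min 1 (1/Q^2) \<ge> 1/4" by (rule Q_arith1[OF Qpos Qle])
  have b1: "4 * (real n - 1) * min 1 (1/Q^2) \<le> t" using mf(1) tpos unfolding t_def by blast
  have b2: "4 * (real n - 1) * min 1 (1/Q^2) \<le> real (n*n) - t" using mf(2) tlt unfolding t_def by blast
  have nr: "real n - 1 \<ge> 1" using n2 by simp
  have l1: "real n - 1 \<le> t"
  proof -
    have "(real n - 1) * 1 \<le> (real n - 1) * (4 * min 1 (1/Q^2))"
      using c4 nr by (intro mult_left_mono) auto
    then have "real n - 1 \<le> (real n - 1) * (4 * min 1 (1/Q^2))" by simp
    also have "\<dots> = 4 * (real n - 1) * min 1 (1/Q^2)" by (simp only: mult_ac)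
    also have "\<dots> \<le> t" by (rule b1)
    finally show ?thesis .
  qed
  have l2: "real n - 1 \<le> real (n*n) - t"
  proof -
    have "(real n - 1) * 1 \<le> (real n - 1) * (4 * min 1 (1/Q^2))"
      using c4 nr by (intro mult_left_mono) auto
    then have "real n - 1 \<le> (real n - 1) * (4 * min 1 (1/Q^2))" by simp
    also have "\<dots> = 4 * (real n - 1) * min 1 (1/Q^2)" by (simp only: mult_ac)
    also have "\<dots> \<le> real (n*n) - t" by (rule b2)
    finally show ?thesis .
  qed
  have part1: "Q = 2 \<and> n = 2 \<and> r = 1" if h: "n \<ge> 2 * r"
  proof -
    have "real n - 1 \<le> real r" using l1 tr by simp
    then have "n \<le> r + 1" by linarith
    moreover have "r \<ge> 1" using tpos tr by simp
    ultimately have nr2: "n = 2" "r = 1" using h n2 by auto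
    have "4 * (real n - 1) * min 1 (1/Q^2) \<le> 1" using b1 tr nr2 by simp
    then have "4 * min 1 (1/Q^2) \<le> 1" using nr2 by simp
    then have "Q = 2" by (rule Q_arith2[OF Qpos Qle])
    then show ?thesis using nr2 by simp
  qed
  have part2: "Q = 2 \<and> n = 2 \<and> r = 3" if h: "2 * r \<ge> 2 * n ^ 2 - n"
  proof -
    have "real n - 1 \<le> real (n*n) - real r" using l2 tr by simp
    moreover have "real (2 * r) \<ge> real (2 * n ^ 2 - n)" using h by linarith
    moreover have "real (2 * n ^ 2 - n) = 2 * real (n*n) - real n"
      using n2 by (simp add: power2_eq_square of_nat_diff)
    ultimately have "2 * (real n - 1) \<le> real n" by simp
    then have n2': "n = 2" using n2 by simp
    have "real r < 4" using tlt tr n2' by simp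
    moreover have "2 * r \<ge> 6" using h n2' by simp
    ultimately have r3: "r = 3" by simp
    have "4 * (real n - 1) * min 1 (1/Q^2) \<le> real (n*n) - real r" using b2 tr by simp
    then have "4 * min 1 (1/Q^2) \<le> 1" using n2' r3 by simp
    then have "Q = 2" by (rule Q_arith2[OF Qpos Qle])
    then show ?thesis using n2' r3 by simp
  qed
  show ?thesis using part1 part2 by blast
qed

end
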